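(* Let $G$ be a finite abelian group and $\mathcal{H}$ a finite dimensional complex Hilbert space with $\dim\mathcal{H}\geq 2$. In each of the following two cases there exists no $U$-covariant pure-state informationally complete observable (based on $G/H$ for any proper subgroup $H$ of $G$): (a) $U$ is a unitary representation of $G$ on $\mathcal{H}$; (b) $G$ is cyclic and $U$ is a projective unitary representation of $G$ on $\mathcal{H}$.
   Context: $\mathbb{T}$ is the group of unimodular complex numbers. A projective unitary representation of $G$ on $\mathcal{H}$ is a map $g\mapsto U(g)$ into the unitaries with $U(e)=I$ and $U(gh)=\omega(g,h)U(g)U(h)$, $\omega(g,h)\in\mathbb{T}$. An observable with finite outcome set $\Omega$ is a map $\mathsf{M}$ from $\Omega$ to positive operators on $\mathcal{H}$ with $\sum_{x\in\Omega}\mathsf{M}(x)=I$. It is pure-state informationally complete (PIC) if for any two different pure states (rank-one projections) $\varrho_1\neq\varrho_2$ there is $x\in\Omega$ with $\mathrm{tr}(\varrho_1\mathsf{M}(x))\neq\mathrm{tr}(\varrho_2\mathsf{M}(x))$. For a subgroup $H$ of $G$, $G$ acts on the set of left cosets $G/H$ by $g'\cdot gH=g'gH$; an observable $\mathsf{M}$ on $\Omega=G/H$ is $U$-covariant if $U(g)\mathsf{M}(x)U(g)^*=\mathsf{M}(g\cdot x)$ for all $g\in G$, $x\in G/H$. *)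

theory Defs
  imports "HOL-Analysis.Analysis" "HOL-Algebra.Left_Coset" "HOL-Algebra.Elementary_Groups"
begin

text \<open>The Hilbert space is \<open>complex^'n\<close> (finite dimension \<open>CARD('n)\<close>), operators are
  matrices \<open>complex^'n^'n\<close>.\<close>

definition cinner :: "complex^'n \<Rightarrow> complex^'n \<Rightarrow> complex" where
  "cinner v w = (\<Sum>i\<in>UNIV. cnj (v$i) * w$i)"

definition adj :: "complex^'n^'n \<Rightarrow> complex^'n^'n" where
  "adj A = (\<chi> i j. cnj (A$j$i))"

definition csmult :: "complex \<Rightarrow> complex^'n^'n \<Rightarrow> complex^'n^'n" where
  "csmult c A = (\<chi> i j. c * A$i$j)"

definition unitary_op :: "complex^'n^'n \<Rightarrow> bool" where
  "unitary_op U \<longleftrightarrow> adj U ** U = mat 1 \<and> U ** adj U = mat 1"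

definition positive_op :: "complex^'n^'n \<Rightarrow> bool" where
  "positive_op A \<longleftrightarrow> (\<forall>v. Im (cinner v (A *v v)) = 0 \<and> Re (cinner v (A *v v)) \<ge> 0)"

definition pure_state :: "complex^'n^'n \<Rightarrow> bool" where
  "pure_state P \<longleftrightarrow> P ** P = P \<and> adj P = P \<and> rank P = 1"

definition proj_unitary_rep :: "('g, 'b) monoid_scheme \<Rightarrow> ('g \<Rightarrow> complex^'n^'n) \<Rightarrow> bool" where
  "proj_unitary_rep G U \<longleftrightarrow>
     U \<one>\<^bsub>G\<^esub> = mat 1 \<and> (\<forall>g\<in>carrier G. unitary_op (U g)) \<and>
     (\<forall>g\<in>carrier G. \<forall>h\<in>carrier G. \<exists>\<omega>. cmod \<omega> = 1 \<and>
         U (g \<otimes>\<^bsub>G\<^esub> h) = csmult \<omega> (U g ** U h))"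

definition unitary_rep :: "('g, 'b) monoid_scheme \<Rightarrow> ('g \<Rightarrow> complex^'n^'n) \<Rightarrow> bool" where
  "unitary_rep G U \<longleftrightarrow>
     U \<one>\<^bsub>G\<^esub> = mat 1 \<and> (\<forall>g\<in>carrier G. unitary_op (U g)) \<and>
     (\<forall>g\<in>carrier G. \<forall>h\<in>carrier G. U (g \<otimes>\<^bsub>G\<^esub> h) = U g ** U h)"

definition observable :: "'x set \<Rightarrow> ('x \<Rightarrow> complex^'n^'n) \<Rightarrow> bool" where
  "observable \<Omega> M \<longleftrightarrow> finite \<Omega> \<and> (\<forall>x\<in>\<Omega>. positive_op (M x)) \<and> (\<Sum>x\<in>\<Omega>. M x) = mat 1"

definition PIC :: "'x set \<Rightarrow> ('x \<Rightarrow> complex^'n^'n) \<Rightarrow> bool" where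
  "PIC \<Omega> M \<longleftrightarrow> (\<forall>\<rho>1 \<rho>2. pure_state \<rho>1 \<longrightarrow> pure_state \<rho>2 \<longrightarrow> \<rho>1 \<noteq> \<rho>2 \<longrightarrow>
      (\<exists>x\<in>\<Omega>. trace (\<rho>1 ** M x) \<noteq> trace (\<rho>2 ** M x)))"

definition covariant :: "('g, 'b) monoid_scheme \<Rightarrow> 'g set \<Rightarrow> ('g \<Rightarrow> complex^'n^'n)
     \<Rightarrow> ('g set \<Rightarrow> complex^'n^'n) \<Rightarrow> bool" where
  "covariant G H U M \<longleftrightarrow> (\<forall>g\<in>carrier G. \<forall>x\<in>lcosets\<^bsub>G\<^esub> H.
      U g ** M x ** adj (U g) = M (g <#\<^bsub>G\<^esub> x))"

end

theory Submission
  imports Defs "HOL-Algebra.Multiplicative_Group"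
begin

lemma mv_scal: "(A::complex^'n^'m) *v (c *s x) = c *s (A *v x)"
  by (simp add: vec_eq_iff matrix_vector_mult_def sum_distrib_left algebra_simps)

lemma cinner_adj: "cinner (A *v x) y = cinner x (adj A *v (y::complex^'n))"
proof -
  have "cinner (A *v x) y = (\<Sum>i\<in>UNIV. \<Sum>j\<in>UNIV. cnj (A$i$j) * cnj (x$j) * y$i)"
    unfolding cinner_def matrix_vector_mult_def by (simp add: sum_distrib_right)
  also have "\<dots> = (\<Sum>j\<in>UNIV. \<Sum>i\<in>UNIV. cnj (A$i$j) * cnj (x$j) * y$i)"
    by (rule sum.swap)
  also have "\<dots> = cinner x (adj A *v y)"
    unfolding cinner_def matrix_vector_mult_def adj_def by (simp add: sum_distrib_left mult_ac)
  finally show ?thesis .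
qed

lemma adj_adj[simp]: "adj (adj A) = A"
  by (simp add: adj_def vec_eq_iff)

lemma cinner_adj2: "cinner x (A *v y) = cinner (adj A *v x) (y::complex^'n)"
  using cinner_adj[of "adj A" x y] by simp

lemma cinner_scal_r: "cinner x (c *s y) = c * cinner x y"
  unfolding cinner_def by (simp add: sum_distrib_left mult_ac)

lemma cinner_scal_l: "cinner (c *s x) y = cnj c * cinner x y"
  unfolding cinner_def by (simp add: sum_distrib_left mult_ac)

lemma cinner_add_r: "cinner x (y + z) = cinner x y + cinner x z"
  unfolding cinner_def by (simp add: sum.distrib algebra_simps)

lemma cinner_diff_r: "cinner x (y - z) = cinner x y - cinner x z"
  unfolding cinner_def by (simp add: sum_subtractf algebra_simps)

lemma cinner_cnj: "cinner y x = cnj (cinner x y)"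
  unfolding cinner_def by (simp add: mult_ac)

lemma inner_cinner: "x \<bullet> y = Re (cinner x (y::complex^'n))"
  unfolding cinner_def inner_vec_def by (simp add: inner_complex_def Re_sum)

lemma Im_cinner_self: "Im (cinner x x) = 0"
  unfolding cinner_def by (simp add: Im_sum)

lemma cinner_self: "cinner x x = complex_of_real (x \<bullet> x)"
  by (simp add: complex_eq_iff inner_cinner Im_cinner_self)

lemma scaleR_cvec: "(r::real) *\<^sub>R (x::complex^'n) = complex_of_real r *s x"
  apply (subst vec_eq_iff, rule allI)
  apply (simp only: vector_scaleR_component vector_smult_component)
  by (simp add: scaleR_conv_of_real)

lemma adj_mult: "adj (A ** B) = adj B ** adj (A::complex^'n^'n)"
  by (simp add: adj_def vec_eq_iff matrix_matrix_mult_def mult_ac)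

lemma adj_add: "adj (A + B) = adj A + adj B"
  by (simp add: adj_def vec_eq_iff)

lemma adj_diff: "adj (A - B) = adj A - adj B"
  by (simp add: adj_def vec_eq_iff)

lemma adj_csmult: "adj (csmult c A) = csmult (cnj c) (adj A)"
  by (simp add: adj_def csmult_def vec_eq_iff)

lemma csmult_mult_l: "csmult c A ** B = csmult c (A ** (B::complex^'n^'n))"
  by (simp add: csmult_def vec_eq_iff matrix_matrix_mult_def sum_distrib_left mult_ac)

lemma csmult_mult_r: "A ** csmult c B = csmult c (A ** (B::complex^'n^'n))"
  by (simp add: csmult_def vec_eq_iff matrix_matrix_mult_def sum_distrib_left mult_ac)

lemma csmult_csmult: "csmult c (csmult d A) = csmult (c*d) A"
  by (simp add: csmult_def vec_eq_iff mult_ac)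

lemma csmult_one: "csmult 1 A = A"
  by (simp add: csmult_def vec_eq_iff)

lemma mult_add_r: "A ** (B + C) = A ** B + A ** (C::complex^'n^'n)"
  by (simp add: vec_eq_iff matrix_matrix_mult_def sum.distrib algebra_simps)
lemma mult_add_l: "(A + B) ** C = A ** C + B ** (C::complex^'n^'n)"
  by (simp add: vec_eq_iff matrix_matrix_mult_def sum.distrib algebra_simps)
lemma mult_diff_r: "A ** (B - C) = A ** B - A ** (C::complex^'n^'n)"
  by (simp add: vec_eq_iff matrix_matrix_mult_def sum_subtractf algebra_simps)
lemma mult_diff_l: "(A - B) ** C = A ** C - B ** (C::complex^'n^'n)"
  by (simp add: vec_eq_iff matrix_matrix_mult_def sum_subtractf algebra_simps)

lemma quad0:
  fixes a b :: real assumes "\<forall>t. a*t + b*t^2 \<le> 0" shows "a = 0"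
proof -
  define k where "k = 1/(\<bar>b\<bar>+1)"
  have s0: "k > 0" unfolding k_def by simp
  have s1: "k*(\<bar>b\<bar>+1) = 1" unfolding k_def by simp
  have "\<bar>b*k\<bar> < 1" using s0 s1 by (simp add: abs_mult algebra_simps)
  hence pos: "k*(1+b*k) > 0" using s0 by (simp add: abs_less_iff)
  have "a*(k*a) + b*(k*a)^2 \<le> 0" using assms by blast
  hence "a^2 * (k*(1 + b*k)) \<le> 0" by (simp add: algebra_simps power2_eq_square)
  show ?thesis
  proof (rule ccontr)
    assume "a \<noteq> 0"
    hence "a^2 > 0" by simp
    hence "a^2 * (k*(1+b*k)) > 0" using pos by (rule mult_pos_pos)
    thus False using \<open>a^2 * (k*(1+b*k)) \<le> 0\<close> by simp
  qed
qed

lemma cont_mv: "continuous_on A (\<lambda>v. (S::complex^'n^'n) *v v)"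
  by (intro linear_continuous_on linear_conv_bounded_linear[THEN iffD1] matrix_vector_mul_linear)



lemma mv_scaleR: "(A::complex^'n^'m) *v (c *\<^sub>R x) = c *\<^sub>R (A *v x)"
  by (simp add: scaleR_cvec mv_scal)

lemma herm_eig:
  fixes S :: "complex^'n^'n"
  assumes sa: "\<And>x y. (S *v x) \<bullet> y = x \<bullet> (S *v y)"
    and W: "subspace W" and nz: "\<exists>w\<in>W. w \<noteq> 0" and inv: "\<And>x. x\<in>W \<Longrightarrow> S *v x \<in> W"
  shows "\<exists>v\<in>W. v \<noteq> 0 \<and> (\<exists>\<mu>::real. S *v v = \<mu> *\<^sub>R v)"
proof -
  define q where "q v = v \<bullet> (S *v v)" for v
  define K where "K = W \<inter> sphere 0 1"
  have cK: "compact K" unfolding K_def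
    by (intro closed_Int_compact closed_subspace W compact_sphere)
  obtain w where w: "w\<in>W" "w\<noteq>0" using nz by blast
  have "(1/norm w) *\<^sub>R w \<in> K" using W w by (simp add: K_def subspace_scale)
  hence neK: "K \<noteq> {}" by blast
  have cont: "continuous_on K q" unfolding q_def
    by (intro continuous_intros cont_mv)
  obtain v where v: "v\<in>K" "\<forall>y\<in>K. q y \<le> q v"
    using continuous_attains_sup[OF cK neK cont] by blast
  define \<mu> where "\<mu> = q v"
  have vW: "v \<in> W" and nv: "norm v = 1" using v(1) by (auto simp: K_def)
  have vv: "v \<bullet> v = 1" using nv by (simp add: norm_eq_1)
  have qscale: "q (c *\<^sub>R y) = c^2 * q y" for c y
    unfolding q_def by (simp add: mv_scaleR power2_eq_square)
  have key: "q y \<le> \<mu> * (y \<bullet> y)" if "y \<in> W" for y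
  proof (cases "y = 0")
    case True thus ?thesis by (simp add: q_def)
  next
    case False
    hence "(1/norm y) *\<^sub>R y \<in> K" using W that by (simp add: K_def subspace_scale)
    hence "q ((1/norm y) *\<^sub>R y) \<le> \<mu>" using v \<mu>_def by blast
    hence "q y / (norm y)^2 \<le> \<mu>" by (simp add: qscale power_divide)
    hence "q y \<le> \<mu> * (norm y)^2" using False by (simp add: divide_le_eq)
    thus ?thesis by (simp add: power2_norm_eq_inner)
  qed
  have orth: "w \<bullet> (S *v v - \<mu> *\<^sub>R v) = 0" if wW: "w \<in> W" for w
  proof -
    have "\<forall>t. (2*(w \<bullet> (S *v v) - \<mu> * (v \<bullet> w)))*t + (q w - \<mu> * (w \<bullet> w))*t^2 \<le> 0"
    proof
      fix t :: real
      have "v + t *\<^sub>R w \<in> W" using W vW wW by (simp add: subspace_add subspace_scale)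
      hence A: "q (v + t *\<^sub>R w) \<le> \<mu> * ((v + t *\<^sub>R w) \<bullet> (v + t *\<^sub>R w))" by (rule key)
      have B: "q (v + t *\<^sub>R w) = \<mu> + 2*t*(w \<bullet> (S *v v)) + t^2 * q w"
        unfolding q_def \<mu>_def
        using sa[of v w] by (simp add: matrix_vector_right_distrib mv_scaleR
            inner_add_left inner_add_right power2_eq_square algebra_simps inner_commute)
      have C: "(v + t *\<^sub>R w) \<bullet> (v + t *\<^sub>R w) = 1 + 2*t*(v \<bullet> w) + t^2 * (w \<bullet> w)"
        using vv by (simp add: inner_add_left inner_add_right power2_eq_square algebra_simps inner_commute)
      have D: "\<mu> + 2*t*(w \<bullet> (S *v v)) + t^2 * q w \<le> \<mu> * (1 + 2*t*(v \<bullet> w) + t^2 * (w \<bullet> w))"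
        using A unfolding B C .
      thus "(2*(w \<bullet> (S *v v) - \<mu> * (v \<bullet> w)))*t + (q w - \<mu> * (w \<bullet> w))*t^2 \<le> 0"
        by (simp add: algebra_simps)
    qed
    hence "2*(w \<bullet> (S *v v) - \<mu> * (v \<bullet> w)) = 0" by (rule quad0)
    thus ?thesis by (simp add: inner_diff_right inner_commute)
  qed
  have "S *v v - \<mu> *\<^sub>R v \<in> W" using W vW inv by (simp add: subspace_diff subspace_scale)
  hence "(S *v v - \<mu> *\<^sub>R v) \<bullet> (S *v v - \<mu> *\<^sub>R v) = 0" by (rule orth)
  hence "S *v v = \<mu> *\<^sub>R v" by simp
  moreover have "v \<noteq> 0" using nv by auto
  ultimately show ?thesis using vW by blast
qed

lemma common_eig:
  fixes Ss :: "(complex^'n^'n) list"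
  assumes "\<And>S x y. S \<in> set Ss \<Longrightarrow> (S *v x) \<bullet> y = x \<bullet> (S *v y)"
    and "\<And>S T. S \<in> set Ss \<Longrightarrow> T \<in> set Ss \<Longrightarrow> S ** T = T ** S"
    and "subspace W" and "\<exists>w\<in>W. w \<noteq> 0"
    and "\<And>S x. S \<in> set Ss \<Longrightarrow> x \<in> W \<Longrightarrow> S *v x \<in> W"
  shows "\<exists>v\<in>W. v \<noteq> 0 \<and> (\<forall>S\<in>set Ss. \<exists>\<mu>::real. S *v v = \<mu> *\<^sub>R v)"
  using assms
proof (induction Ss arbitrary: W)
  case Nil thus ?case by auto
next
  case (Cons S Ss)
  have saS: "\<And>x y. (S *v x) \<bullet> y = x \<bullet> (S *v y)" using Cons.prems(1) by simp
  have invS: "\<And>x. x \<in> W \<Longrightarrow> S *v x \<in> W" using Cons.prems(5) by simp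
  obtain v \<mu> where v: "v\<in>W" "v\<noteq>0" "S *v v = \<mu> *\<^sub>R v"
    using herm_eig[of S W, OF saS Cons.prems(3,4) invS] by blast
  define W' where "W' = {x\<in>W. S *v x = \<mu> *\<^sub>R x}"
  have sW': "subspace W'" using Cons.prems(3)
    by (auto simp: subspace_def W'_def matrix_vector_right_distrib mv_scaleR scaleR_right_distrib)
  have nz': "\<exists>w\<in>W'. w \<noteq> 0" using v by (auto simp: W'_def)
  have inv': "T *v x \<in> W'" if T: "T \<in> set Ss" and x: "x \<in> W'" for T x
  proof -
    have "T *v x \<in> W" using Cons.prems(5)[of T x] T x by (auto simp: W'_def)
    moreover have "S ** T = T ** S" using Cons.prems(2) T by simp
    hence "S *v (T *v x) = T *v (S *v x)" by (simp add: matrix_vector_mul_assoc)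
    hence "S *v (T *v x) = \<mu> *\<^sub>R (T *v x)" using x by (simp add: W'_def mv_scaleR)
    ultimately show ?thesis by (simp add: W'_def)
  qed
  obtain v' where v': "v' \<in> W'" "v' \<noteq> 0" "\<forall>T\<in>set Ss. \<exists>\<mu>::real. T *v v' = \<mu> *\<^sub>R v'"
    using Cons.IH[of W'] Cons.prems(1,2) sW' nz' inv' by auto
  thus ?case by (auto simp: W'_def)
qed

definition hp :: "complex^'n^'n \<Rightarrow> complex^'n^'n" where "hp X = X + adj X"
definition sp :: "complex^'n^'n \<Rightarrow> complex^'n^'n" where "sp X = csmult \<i> (adj X - X)"

lemma adj_hp: "adj (hp X) = hp X"
  by (simp add: hp_def adj_add add.commute)

lemma adj_sp: "adj (sp X) = sp X"
  by (simp add: sp_def adj_def vec_eq_iff csmult_def algebra_simps)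

lemma sa_of_adj: "adj S = S \<Longrightarrow> (S *v x) \<bullet> y = x \<bullet> (S *v y)"
  by (metis cinner_adj inner_cinner)

lemma cm_add: "P ** Q1 = Q1 ** P \<Longrightarrow> P ** Q2 = Q2 ** P \<Longrightarrow> P ** (Q1 + Q2) = (Q1 + Q2) ** (P::complex^'n^'n)"
  by (simp add: mult_add_r mult_add_l)
lemma cm_diff: "P ** Q1 = Q1 ** P \<Longrightarrow> P ** Q2 = Q2 ** P \<Longrightarrow> P ** (Q1 - Q2) = (Q1 - Q2) ** (P::complex^'n^'n)"
  by (simp add: mult_diff_r mult_diff_l)
lemma cm_sm: "P ** Q = Q ** P \<Longrightarrow> P ** (csmult c Q) = (csmult c Q) ** (P::complex^'n^'n)"
  by (simp add: csmult_mult_l csmult_mult_r)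

lemma cm_parts:
  fixes X Y :: "complex^'n^'n"
  assumes "X ** Y = Y ** X" "X ** adj Y = adj Y ** X" "adj X ** Y = Y ** adj X" "adj X ** adj Y = adj Y ** adj X"
  shows "hp X ** hp Y = hp Y ** hp X" "hp X ** sp Y = sp Y ** hp X"
    "sp X ** hp Y = hp Y ** sp X" "sp X ** sp Y = sp Y ** sp X"
proof -
  have a: "X ** hp Y = hp Y ** X" "X ** sp Y = sp Y ** X"
    unfolding hp_def sp_def using assms by (auto intro!: cm_add cm_diff cm_sm)
  have b: "adj X ** hp Y = hp Y ** adj X" "adj X ** sp Y = sp Y ** adj X"
    unfolding hp_def sp_def using assms by (auto intro!: cm_add cm_diff cm_sm)
  have c1: "hp Y ** hp X = hp X ** hp Y" "sp Y ** hp X = hp X ** sp Y"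
    unfolding hp_def[of X] using a b by (auto intro!: cm_add)
  have c2: "hp Y ** sp X = sp X ** hp Y" "sp Y ** sp X = sp X ** sp Y"
    unfolding sp_def[of X] using a b by (auto intro!: cm_diff cm_sm)
  show "hp X ** hp Y = hp Y ** hp X" using c1(1) by (rule sym)
  show "hp X ** sp Y = sp Y ** hp X" using c1(2) by (rule sym)
  show "sp X ** hp Y = hp Y ** sp X" using c2(1) by (rule sym)
  show "sp X ** sp Y = sp Y ** sp X" using c2(2) by (rule sym)
qed



lemma unitary_cm:
  fixes X Y :: "complex^'n^'n"
  assumes "unitary_op Y" "X ** Y = Y ** X"
  shows "X ** adj Y = adj Y ** X"
proof -
  have "adj Y ** X = adj Y ** X ** (Y ** adj Y)" using assms(1) by (simp add: unitary_op_def)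
  also have "\<dots> = adj Y ** (X ** Y) ** adj Y" by (simp add: matrix_mul_assoc)
  also have "\<dots> = adj Y ** (Y ** X) ** adj Y" using assms(2) by simp
  also have "\<dots> = (adj Y ** Y) ** X ** adj Y" by (simp add: matrix_mul_assoc)
  also have "\<dots> = X ** adj Y" using assms(1) by (simp add: unitary_op_def)
  finally show ?thesis by simp
qed

lemma csmult_mv: "csmult c A *v x = c *s (A *v (x::complex^'n))"
  by (simp add: csmult_def vec_eq_iff matrix_vector_mult_def sum_distrib_left mult_ac)

lemma eig_from_parts:
  fixes X :: "complex^'n^'n"
  assumes u: "unitary_op X" and e: "e \<noteq> 0" and a: "hp X *v e = a *\<^sub>R e" and b: "sp X *v e = b *\<^sub>R e"
  shows "\<exists>l. X *v e = l *s e \<and> adj X *v e = cnj l *s e \<and> l * cnj l = 1"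
proof -
  define l where "l = (complex_of_real a + \<i> * complex_of_real b) / 2"
  have X1: "X = csmult (1/2) (hp X + csmult \<i> (sp X))"
    by (simp add: hp_def sp_def csmult_def adj_def vec_eq_iff algebra_simps)
  have X2: "adj X = csmult (1/2) (hp X - csmult \<i> (sp X))"
    by (simp add: hp_def sp_def csmult_def adj_def vec_eq_iff algebra_simps)
  have ev1: "X *v e = l *s e"
    apply (subst X1)
    by (simp add: csmult_mv matrix_vector_mult_add_rdistrib a b scaleR_cvec vector_smult_assoc
        l_def vec_eq_iff algebra_simps)
  have ev2: "adj X *v e = cnj l *s e"
    apply (subst X2)
    by (simp add: csmult_mv matrix_vector_mult_diff_rdistrib a b scaleR_cvec vector_smult_assoc
        l_def vec_eq_iff algebra_simps)
  have "e = adj X *v (X *v e)" using u by (simp add: unitary_op_def matrix_vector_mul_assoc)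
  also have "\<dots> = (l * cnj l) *s e" by (simp add: ev1 ev2 mv_scal vector_smult_assoc)
  finally have "1 *s e = (l * cnj l) *s e" by simp
  hence "l * cnj l = 1" using e by (simp only: vector_mul_rcancel) auto
  thus ?thesis using ev1 ev2 by blast
qed

lemma exists_orth:
  fixes e :: "complex^'n"
  assumes "CARD('n) \<ge> 2"
  shows "\<exists>v. v \<noteq> 0 \<and> cinner e v = 0"
proof -
  obtain i :: 'n where True by blast
  have "UNIV - {i} \<noteq> {}"
  proof
    assume "UNIV - {i} = {}"
    hence "UNIV = {i}" by blast
    hence "CARD('n) = card {i}" by (metis)
    hence "CARD('n) = 1" by simp
    thus False using assms by simp
  qed
  then obtain j where ij: "j \<noteq> i" by blast
  show ?thesis
  proof (cases "e$i = 0 \<and> e$j = 0")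
    case True
    have "cinner e (axis i 1) = cnj (e$i)"
      unfolding cinner_def axis_def by (simp add: if_distrib cong: if_cong)
    moreover have "axis i (1::complex) \<noteq> 0" by (simp add: axis_eq_0_iff)
    ultimately have "axis i (1::complex) \<noteq> 0 \<and> cinner e (axis i 1) = 0" using True by simp
    thus ?thesis by blast
  next
    case False
    define v :: "complex^'n" where "v = (\<chi> k. (if k = i then cnj (e$j) else 0) + (if k = j then - cnj (e$i) else 0))"
    have "v$i = cnj (e$j)" "v$j = - cnj (e$i)" using ij by (simp_all add: v_def)
    hence "v \<noteq> 0" using False by (metis complex_cnj_zero_iff neg_equal_0_iff_equal zero_index)
    moreover have "cinner e v = 0"
    proof -
      have "cinner e v = (\<Sum>k\<in>UNIV. (if k = i then cnj (e$k) * cnj (e$j) else 0))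
            + (\<Sum>k\<in>UNIV. (if k = j then - cnj (e$k) * cnj (e$i) else 0))"
        unfolding cinner_def v_def by (subst sum.distrib[symmetric], rule sum.cong, auto)
      also have "\<dots> = 0" by simp
      finally show ?thesis .
    qed
    ultimately show ?thesis by blast
  qed
qed

definition ceig :: "complex^'n^'n \<Rightarrow> complex^'n \<Rightarrow> bool" where
  "ceig X e \<longleftrightarrow> (\<exists>l. X *v e = l *s e \<and> adj X *v e = cnj l *s e \<and> l * cnj l = 1)"

lemma ceig_scale: "ceig X e \<Longrightarrow> ceig X (c *\<^sub>R e)"
proof -
  assume "ceig X e"
  then obtain l where l: "X *v e = l *s e" "adj X *v e = cnj l *s e" "l * cnj l = 1"
    unfolding ceig_def by blast
  have "X *v (c *\<^sub>R e) = l *s (c *\<^sub>R e)" "adj X *v (c *\<^sub>R e) = cnj l *s (c *\<^sub>R e)"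
    by (simp_all only: mv_scaleR l scaleR_cvec mv_scal vector_smult_assoc mult.commute)
  thus ?thesis using l(3) unfolding ceig_def by blast
qed

lemma normalize_unit:
  fixes e :: "complex^'n" assumes "e \<noteq> 0"
  shows "cinner ((1/norm e) *\<^sub>R e) ((1/norm e) *\<^sub>R e) = 1"
  using assms by (simp add: cinner_self power2_norm_eq_inner[symmetric] norm_eq_1[symmetric])

lemma unit_common:
  fixes Us :: "(complex^'n^'n) list"
  assumes un: "\<And>X. X \<in> set Us \<Longrightarrow> unitary_op X"
    and cm: "\<And>X Y. X \<in> set Us \<Longrightarrow> Y \<in> set Us \<Longrightarrow> X ** Y = Y ** X"
    and n2: "CARD('n) \<ge> 2"
  shows "\<exists>e1 e2. cinner e1 e1 = 1 \<and> cinner e2 e2 = 1 \<and> cinner e1 e2 = 0 \<and>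
      (\<forall>X\<in>set Us. ceig X e1 \<and> ceig X e2)"
proof -
  define Ss where "Ss = concat (map (\<lambda>X. [hp X, sp X]) Us)"
  have setSs: "set Ss = (\<Union>X\<in>set Us. {hp X, sp X})" unfolding Ss_def by auto
  have adjS: "adj S = S" if "S \<in> set Ss" for S
    using that adj_hp adj_sp by (auto simp: setSs)
  have saS: "(S *v x) \<bullet> y = x \<bullet> (S *v y)" if "S \<in> set Ss" for S x y
    using adjS[OF that] by (rule sa_of_adj)
  have cmS: "S ** T = T ** S" if ST: "S \<in> set Ss" "T \<in> set Ss" for S T
  proof -
    obtain X Y where XY: "X \<in> set Us" "Y \<in> set Us" "S = hp X \<or> S = sp X" "T = hp Y \<or> T = sp Y"
      using ST unfolding setSs by blast
    have c1: "X ** Y = Y ** X" using cm XY by blast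
    have c2: "X ** adj Y = adj Y ** X" using unitary_cm[OF un[OF XY(2)] c1] .
    have c3: "adj X ** Y = Y ** adj X" using unitary_cm[OF un[OF XY(1)] c1[symmetric]] by (rule sym)
    have c4: "adj X ** adj Y = adj Y ** adj X" using c1 by (metis adj_mult)
    show ?thesis using cm_parts[OF c1 c2 c3 c4] XY(3,4) by auto
  qed
  have toceig: "\<forall>X\<in>set Us. ceig X v"
    if vh: "v \<noteq> 0" "\<forall>S\<in>set Ss. \<exists>\<mu>::real. S *v v = \<mu> *\<^sub>R v" for v
  proof
    fix X assume X: "X \<in> set Us"
    obtain a b where "hp X *v v = a *\<^sub>R v" "sp X *v v = b *\<^sub>R v"
      using vh(2) X unfolding setSs by blast
    thus "ceig X v" using eig_from_parts[OF un[OF X] vh(1)] unfolding ceig_def by blast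
  qed
  obtain e1 where e1: "e1 \<noteq> 0" "\<forall>S\<in>set Ss. \<exists>\<mu>::real. S *v e1 = \<mu> *\<^sub>R e1"
    using common_eig[of Ss UNIV, OF saS cmS] by auto
  define f1 where "f1 = (1/norm e1) *\<^sub>R e1"
  have f1: "cinner f1 f1 = 1" "\<forall>X\<in>set Us. ceig X f1"
    using normalize_unit[OF e1(1)] toceig[OF e1] ceig_scale by (auto simp: f1_def)
  have f1S: "\<forall>S\<in>set Ss. \<exists>\<mu>::real. S *v f1 = \<mu> *\<^sub>R f1"
    using e1(2) by (auto simp: f1_def mv_scaleR)
  define W where "W = {v. cinner f1 v = 0}"
  have sW: "subspace W"
    by (auto simp: subspace_def W_def cinner_add_r scaleR_cvec cinner_scal_r) (simp add: cinner_def)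
  have nzW: "\<exists>w\<in>W. w \<noteq> 0" using exists_orth[OF n2, of f1] by (auto simp: W_def)
  have invW: "S *v x \<in> W" if Sx: "S \<in> set Ss" "x \<in> W" for S x
  proof -
    obtain \<mu> :: real where mu: "S *v f1 = \<mu> *\<^sub>R f1" using f1S Sx(1) by blast
    have "cinner f1 (S *v x) = cinner (adj S *v f1) x" by (rule cinner_adj2)
    also have "\<dots> = cinner (complex_of_real \<mu> *s f1) x" using adjS[OF Sx(1)] mu by (simp add: scaleR_cvec)
    also have "\<dots> = 0" using Sx(2) by (simp add: cinner_scal_l W_def)
    finally show ?thesis by (simp add: W_def)
  qed
  obtain e2 where e2: "e2 \<in> W" "e2 \<noteq> 0" "\<forall>S\<in>set Ss. \<exists>\<mu>::real. S *v e2 = \<mu> *\<^sub>R e2"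
    using common_eig[of Ss W, OF saS cmS sW nzW invW] by auto
  define f2 where "f2 = (1/norm e2) *\<^sub>R e2"
  have f2: "cinner f2 f2 = 1" "\<forall>X\<in>set Us. ceig X f2"
    using normalize_unit[OF e2(2)] toceig[OF e2(2,3)] ceig_scale by (auto simp: f2_def)
  have "cinner f1 f2 = 0" using e2(1) by (simp add: f2_def W_def scaleR_cvec cinner_scal_r)
  thus ?thesis using f1 f2 by blast
qed



definition outer :: "complex^'n \<Rightarrow> complex^'n^'n" where
  "outer e = (\<chi> i j. e$i * cnj (e$j))"

lemma outer_mv: "outer e *v v = cinner e v *s e"
  by (simp add: outer_def cinner_def matrix_vector_mult_def vec_eq_iff sum_distrib_left mult_ac)

lemma outer_idem: "cinner e e = 1 \<Longrightarrow> outer e ** outer e = outer e"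
proof -
  assume h: "cinner e e = 1"
  have "(outer e ** outer e)$i$k = outer e $i$k" for i k
  proof -
    have "(outer e ** outer e)$i$k = (\<Sum>j\<in>UNIV. e$i * cnj (e$k) * (cnj (e$j) * e$j))"
      by (simp add: outer_def matrix_matrix_mult_def mult_ac)
    also have "\<dots> = e$i * cnj (e$k) * cinner e e"
      by (simp add: cinner_def sum_distrib_left)
    finally show ?thesis using h by (simp add: outer_def)
  qed
  thus ?thesis by (simp add: vec_eq_iff)
qed

lemma outer_adj: "adj (outer e) = outer e"
  by (simp add: outer_def adj_def vec_eq_iff mult.commute)

lemma trace_outer: "trace (outer e ** A) = cinner e (A *v e)"
proof -
  have "trace (outer e ** A) = (\<Sum>i\<in>UNIV. \<Sum>j\<in>UNIV. e$i * cnj (e$j) * A$j$i)"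
    by (simp add: trace_def outer_def matrix_matrix_mult_def)
  also have "\<dots> = (\<Sum>j\<in>UNIV. \<Sum>i\<in>UNIV. e$i * cnj (e$j) * A$j$i)" by (rule sum.swap)
  also have "\<dots> = cinner e (A *v e)"
    by (simp add: cinner_def matrix_vector_mult_def sum_distrib_left mult_ac)
  finally show ?thesis .
qed

lemma rank_outer:
  fixes e :: "complex^'n" assumes "e \<noteq> 0" shows "rank (outer e) = 1"
proof -
  define ce :: "complex^'n" where "ce = (\<chi> j. cnj (e$j))"
  have rowi: "row i (outer e) = e$i *s ce" for i
    by (simp add: row_def outer_def ce_def vec_eq_iff)
  have sub: "rows (outer e) \<subseteq> vec.span {ce}"
    by (auto simp: rows_def rowi intro!: vec.span_scale[OF vec.span_base])
  have "vec.dim (rows (outer e)) \<le> card {ce}"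
    by (rule vec.dim_le_card[OF sub]) simp
  hence le: "vec.dim (rows (outer e)) \<le> 1" by simp
  obtain i where ei: "e$i \<noteq> 0" using assms by (auto simp: vec_eq_iff)
  have "ce \<noteq> 0" using ei by (auto simp: ce_def vec_eq_iff)
  hence "row i (outer e) \<noteq> 0" using ei by (simp add: rowi)
  moreover have "row i (outer e) \<in> rows (outer e)" by (auto simp: rows_def)
  ultimately have "\<not> rows (outer e) \<subseteq> {0}" by blast
  hence "vec.dim (rows (outer e)) \<noteq> 0" by (simp add: vec.dim_eq_0)
  thus ?thesis using le unfolding row_rank_def_gen by linarith
qed

lemma pure_outer: "cinner e e = 1 \<Longrightarrow> pure_state (outer e)"
proof -
  assume h: "cinner e e = 1"
  hence "e \<noteq> 0" by (auto simp: cinner_def)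
  thus ?thesis using h by (simp add: pure_state_def outer_idem outer_adj rank_outer)
qed

lemma cinner_zero_r: "cinner e 0 = 0" by (simp add: cinner_def)

lemma conj_inv:
  assumes "ceig V e"
  shows "cinner e ((V ** A ** adj V) *v e) = cinner e (A *v e)"
proof -
  obtain l where l: "V *v e = l *s e" "adj V *v e = cnj l *s e" "l * cnj l = 1"
    using assms unfolding ceig_def by blast
  have "cinner e ((V ** A ** adj V) *v e) = cinner e (V *v (A *v (adj V *v e)))"
    by (simp add: matrix_vector_mul_assoc matrix_mul_assoc)
  also have "\<dots> = cinner (adj V *v e) (A *v (adj V *v e))" by (rule cinner_adj2)
  also have "\<dots> = (l * cnj l) * cinner e (A *v e)"
    using l(3) by (simp add: l mv_scal cinner_scal_l cinner_scal_r mult.commute)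
  also have "\<dots> = cinner e (A *v e)" by (simp only: l(3) mult_1)
  finally show ?thesis .
qed

lemma sum_quad: "cinner e (sum M S *v e) = (\<Sum>x\<in>S. cinner e (M x *v e))"
proof (cases "finite S")
  case True thus ?thesis
    by (induction S rule: finite_induct)
      (simp_all add: cinner_zero_r matrix_vector_mult_add_rdistrib cinner_add_r)
next
  case False thus ?thesis by (simp add: cinner_zero_r)
qed

fun pw :: "complex^'n^'n \<Rightarrow> nat \<Rightarrow> complex^'n^'n" where
  "pw X 0 = mat 1" | "pw X (Suc k) = pw X k ** X"

lemma pw_add: "pw X m ** pw X k = pw X (m + k)"
  by (induction k) (simp_all add: matrix_mul_assoc)

lemma U_commute:
  fixes G :: "('g, 'b) monoid_scheme" and U :: "'g \<Rightarrow> complex^'n^'n"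
  assumes cg: "comm_group G" and fin: "finite (carrier G)"
    and rep: "unitary_rep G U \<or> (cyclic_group G \<and> proj_unitary_rep G U)"
    and g: "g \<in> carrier G" and h: "h \<in> carrier G"
  shows "U g ** U h = U h ** U g"
proof -
  interpret comm_group G by (rule cg)
  show ?thesis
  proof (cases "unitary_rep G U")
    case True
    thus ?thesis using g h m_comm[OF g h] unfolding unitary_rep_def by metis
  next
    case False
    hence cyc: "cyclic_group G" and pr: "proj_unitary_rep G U" using rep by auto
    obtain x where x: "x \<in> carrier G" "carrier G = range (\<lambda>n::int. x [^]\<^bsub>G\<^esub> n)"
      using cyc cyclic_group by blast
    have pwU: "\<exists>c. U (x [^]\<^bsub>G\<^esub> k) = csmult c (pw (U x) k)" for k :: nat
    proof (induction k)
      case 0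
      have "U \<one>\<^bsub>G\<^esub> = mat 1" using pr by (simp add: proj_unitary_rep_def)
      thus ?case by (auto simp: csmult_one intro!: exI[of _ 1])
    next
      case (Suc k)
      then obtain c where c: "U (x [^]\<^bsub>G\<^esub> k) = csmult c (pw (U x) k)" by blast
      obtain w where w: "U (x [^]\<^bsub>G\<^esub> k \<otimes>\<^bsub>G\<^esub> x) = csmult w (U (x [^]\<^bsub>G\<^esub> k) ** U x)"
        using pr x(1) unfolding proj_unitary_rep_def by (meson nat_pow_closed)
      have "U (x [^]\<^bsub>G\<^esub> Suc k) = csmult (w * c) (pw (U x) (Suc k))"
        by (simp add: w c csmult_mult_l csmult_csmult)
      thus ?case by blast
    qed
    have allg: "\<exists>c k. U y = csmult c (pw (U x) k)" if y: "y \<in> carrier G" for y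
    proof -
      obtain n :: int where n: "y = x [^]\<^bsub>G\<^esub> n" using x y by blast
      have o1: "ord x \<ge> 1" using ord_ge_1[OF fin x(1)] .
      define m where "m = nat (n mod int (ord x))"
      have "int m = n mod int (ord x)" using o1 by (simp add: m_def)
      hence "int (ord x) dvd (int m - n)"
        by (metis dvd_minus_mod minus_diff_eq dvd_minus_iff)
      hence "x [^]\<^bsub>G\<^esub> n = x [^]\<^bsub>G\<^esub> (int m)" using int_pow_eq[OF x(1)] by blast
      hence "y = x [^]\<^bsub>G\<^esub> m" using n by (simp add: int_pow_int)
      thus ?thesis using pwU by blast
    qed
    obtain c1 k1 where 1: "U g = csmult c1 (pw (U x) k1)" using allg[OF g] by blast
    obtain c2 k2 where 2: "U h = csmult c2 (pw (U x) k2)" using allg[OF h] by blast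
    show ?thesis
      by (simp add: 1 2 csmult_mult_l csmult_mult_r csmult_csmult pw_add add.commute mult.commute)
  qed
qed

theorem proposition5:
  fixes G :: "('g, 'b) monoid_scheme" and U :: "'g \<Rightarrow> complex^'n^'n" and H :: "'g set"
  assumes "comm_group G" and "finite (carrier G)"
    and "CARD('n) \<ge> 2"
    and "subgroup H G" and "H \<noteq> carrier G"
    and "unitary_rep G U \<or> (cyclic_group G \<and> proj_unitary_rep G U)"
  shows "\<not> (\<exists>M :: 'g set \<Rightarrow> complex^'n^'n.
            observable (lcosets\<^bsub>G\<^esub> H) M \<and> covariant G H U M \<and> PIC (lcosets\<^bsub>G\<^esub> H) M)"
proof
  assume "\<exists>M :: 'g set \<Rightarrow> complex^'n^'n.
            observable (lcosets\<^bsub>G\<^esub> H) M \<and> covariant G H U M \<and> PIC (lcosets\<^bsub>G\<^esub> H) M"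
  then obtain M :: "'g set \<Rightarrow> complex^'n^'n" where obs: "observable (lcosets\<^bsub>G\<^esub> H) M"
    and cov: "covariant G H U M" and pic: "PIC (lcosets\<^bsub>G\<^esub> H) M" by blast
  interpret comm_group G by (rule assms(1))
  define \<Omega> where "\<Omega> = lcosets\<^bsub>G\<^esub> H"
  have unit: "unitary_op (U g)" if "g \<in> carrier G" for g
    using assms(6) that unfolding unitary_rep_def proj_unitary_rep_def by blast
  obtain Us where Us: "set Us = U ` carrier G" using finite_list[of "U ` carrier G"] assms(2) by blast
  obtain e1 e2 where e: "cinner e1 e1 = 1" "cinner e2 e2 = 1" "cinner e1 e2 = 0"
    "\<forall>X\<in>set Us. ceig X e1 \<and> ceig X e2"
    using unit_common[of Us, OF _ _ assms(3)] unit
      U_commute[OF assms(1,2,6)] unfolding Us by blast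
  have HO: "H \<in> \<Omega>"
  proof -
    have "H = \<one>\<^bsub>G\<^esub> <#\<^bsub>G\<^esub> H" using lcos_mult_one[OF subgroup.subset[OF assms(4)]] by simp
    thus ?thesis unfolding \<Omega>_def LCOSETS_def by blast
  qed
  have xf: "\<exists>a\<in>carrier G. M x = U a ** M H ** adj (U a)" if xO: "x \<in> \<Omega>" for x
  proof -
    obtain a where a: "a \<in> carrier G" "x = a <#\<^bsub>G\<^esub> H" using xO unfolding \<Omega>_def LCOSETS_def by blast
    have "U a ** M H ** adj (U a) = M (a <#\<^bsub>G\<^esub> H)"
      using cov a(1) HO unfolding covariant_def \<Omega>_def by blast
    thus ?thesis using a by metis
  qed
  define f where "f e x = cinner e (M x *v e)" for e x
  have fconst: "f e x = f e H" if xe: "x \<in> \<Omega>" "\<forall>X\<in>set Us. ceig X e" for e x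
  proof -
    obtain a where a: "a \<in> carrier G" "M x = U a ** M H ** adj (U a)" using xf[OF xe(1)] by blast
    have "ceig (U a) e" using xe(2) a(1) unfolding Us by blast
    thus ?thesis unfolding f_def a(2) by (rule conj_inv)
  qed
  have fsum: "of_nat (card \<Omega>) * f e H = 1" if "cinner e e = 1" "\<forall>X\<in>set Us. ceig X e" for e
  proof -
    have "(\<Sum>x\<in>\<Omega>. f e x) = cinner e ((\<Sum>x\<in>\<Omega>. M x) *v e)" unfolding f_def by (rule sum_quad[symmetric])
    also have "\<dots> = 1" using obs that(1) unfolding observable_def \<Omega>_def by simp
    finally have "(\<Sum>x\<in>\<Omega>. f e x) = 1" .
    moreover have "(\<Sum>x\<in>\<Omega>. f e x) = (\<Sum>x\<in>\<Omega>. f e H)" using fconst that(2) by (intro sum.cong) auto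
    ultimately show ?thesis by simp
  qed
  have "f e1 H = f e2 H"
  proof -
    have "of_nat (card \<Omega>) * f e1 H = of_nat (card \<Omega>) * f e2 H"
      using fsum[OF e(1)] fsum[OF e(2)] e(4) by simp
    moreover have h1: "of_nat (card \<Omega>) * f e1 H = 1" using fsum[OF e(1)] e(4) by simp
    hence "(of_nat (card \<Omega>) :: complex) \<noteq> 0" by (metis mult_zero_left zero_neq_one)
    ultimately show ?thesis by simp
  qed
  hence feq: "f e1 x = f e2 x" if "x \<in> \<Omega>" for x using fconst[OF that] e(4) by simp
  have ne: "outer e1 \<noteq> outer e2"
  proof
    assume eq: "outer e1 = outer e2"
    have "outer e1 *v e1 = e1" using e(1) by (simp add: outer_mv)
    moreover have "outer e2 *v e1 = 0" using e(3) cinner_cnj[of e2 e1] by (simp add: outer_mv)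
    moreover have "e1 \<noteq> 0" using e(1) by (auto simp: cinner_def)
    ultimately show False using eq by simp
  qed
  obtain x where x: "x \<in> \<Omega>" "trace (outer e1 ** M x) \<noteq> trace (outer e2 ** M x)"
    using pic pure_outer[OF e(1)] pure_outer[OF e(2)] ne unfolding PIC_def \<Omega>_def by blast
  thus False using feq[OF x(1)] by (simp add: trace_outer f_def)
qed


end
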